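(* Let $n\ge2$, $\alpha\in(1,2]$, $K\ge2$, and let $\mathcal{M}=\mathcal{M}(\alpha,K)$ be the collection of seeded intervals defined below. Then for every real $h$ with $0<h\le n/2$ and every integer $\eta$ with $\max(3h/2,1)\le\eta\le n-\max(3h/2,1)$, there exist integers $l\ge1$ and $v$ such that (i) $(v-l,v+l]\in\mathcal{M}$; (ii) $h/2\le l\le\max(h,1)$; (iii) $|v-\eta|\le l/K\le l/2$. In particular, $(v-l,v+l]\subseteq(\eta-\max(3h/2,1),\ \eta+\max(3h/2,1)]$.
   Context: Seeded intervals $\mathcal{M}(\alpha,K)$ for sample size $n$: let $l_1=1$, $l_{j+1}=\max\{l_j+1,\lfloor\alpha l_j\rfloor\}$ for $j\ge1$, $H=\max\{j:l_j\le n/2\}$, $s_l=\max\{1,\lfloor l/K\rfloor\}$, $\mathcal{I}_l=\{(n-2l,n]\}\cup\{(is_l,\,is_l+2l]: i=0,1,\dots,\lfloor(n-2l)/s_l\rfloor\}$, and $\mathcal{M}(\alpha,K)=\bigcup_{j=1}^{H}\mathcal{I}_{l_j}$, where $(a,b]$ denotes the integer interval $\{a+1,\dots,b\}$. *)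

theory Defs
  imports Complex_Main
begin

text \<open>Lengths: lseq alpha j is l_(j+1) of the paper (0-based index).\<close>
fun lseq :: "real \<Rightarrow> nat \<Rightarrow> int" where
  "lseq \<alpha> 0 = 1"
| "lseq \<alpha> (Suc j) = max (lseq \<alpha> j + 1) \<lfloor>\<alpha> * real_of_int (lseq \<alpha> j)\<rfloor>"

definition Hidx :: "nat \<Rightarrow> real \<Rightarrow> nat" where
  "Hidx n \<alpha> = Max {j. real_of_int (lseq \<alpha> j) \<le> real n / 2}"

definition shift :: "real \<Rightarrow> int \<Rightarrow> int" where
  "shift K l = max 1 \<lfloor>real_of_int l / K\<rfloor>"

definition layer :: "nat \<Rightarrow> real \<Rightarrow> int \<Rightarrow> int set set" where
  "layer n K l = {{int n - 2*l<..int n}} \<union>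
     {{i * shift K l<..i * shift K l + 2*l} | i.
        0 \<le> i \<and> i \<le> \<lfloor>real_of_int (int n - 2*l) / real_of_int (shift K l)\<rfloor>}"

definition seeded :: "nat \<Rightarrow> real \<Rightarrow> real \<Rightarrow> int set set" where
  "seeded n \<alpha> K = (\<Union>j\<in>{0..Hidx n \<alpha>}. layer n K (lseq \<alpha> j))"

end

theory Submission
  imports Defs
begin

lemma lseq_ge1: "lseq a j \<ge> 1"
  by (induction j) auto

lemma lseq_gt: "lseq a (Suc j) > lseq a j"
  by simp

lemma lseq_ge_idx: "lseq a j \<ge> int j + 1"
proof (induction j)
  case 0 then show ?case by simp
next
  case (Suc j) then show ?case using lseq_gt[of a j] by linarith
qed

lemma lseq_le2: assumes "a \<le> 2" shows "lseq a (Suc j) \<le> 2 * lseq a j"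
proof -
  have l1: "lseq a j \<ge> 1" by (rule lseq_ge1)
  have "a * real_of_int (lseq a j) \<le> 2 * real_of_int (lseq a j)"
    using assms l1 by (intro mult_right_mono) auto
  hence "\<lfloor>a * real_of_int (lseq a j)\<rfloor> \<le> 2 * lseq a j"
    by (metis floor_le_iff le_floor_iff floor_of_int of_int_mult of_int_numeral
        order.trans floor_mono)
  thus ?thesis using l1 by simp
qed

lemma fin_lseq: "finite {j. real_of_int (lseq a j) \<le> c}"
proof -
  have "{j. real_of_int (lseq a j) \<le> c} \<subseteq> {..nat \<lceil>c\<rceil>}"
  proof
    fix j assume "j \<in> {j. real_of_int (lseq a j) \<le> c}"
    hence "real_of_int (lseq a j) \<le> c" by simp
    moreover have "lseq a j \<ge> int j + 1" by (rule lseq_ge_idx)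
    ultimately have "real j \<le> c" by linarith
    thus "j \<in> {..nat \<lceil>c\<rceil>}" by (simp add: le_nat_iff) linarith
  qed
  thus ?thesis by (rule finite_subset) simp
qed

theorem lemma7:
  fixes n :: nat and \<alpha> K h :: real and \<eta> :: int
  assumes "n \<ge> 2" and "1 < \<alpha>" and "\<alpha> \<le> 2" and "K \<ge> 2"
    and "0 < h" and "h \<le> real n / 2"
    and "max (3*h/2) 1 \<le> real_of_int \<eta>"
    and "real_of_int \<eta> \<le> real n - max (3*h/2) 1"
  shows "\<exists>l v :: int. l \<ge> 1
     \<and> {v - l<..v + l} \<in> seeded n \<alpha> K
     \<and> h/2 \<le> real_of_int l \<and> real_of_int l \<le> max h 1
     \<and> \<bar>real_of_int (v - \<eta>)\<bar> \<le> real_of_int l / K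
     \<and> real_of_int l / K \<le> real_of_int l / 2
     \<and> {v - l<..v + l} \<subseteq> {x. real_of_int \<eta> - max (3*h/2) 1 < real_of_int x
                                \<and> real_of_int x \<le> real_of_int \<eta> + max (3*h/2) 1}"
proof -
  define S where "S = {j. real_of_int (lseq \<alpha> j) \<le> max h 1}"
  have finS: "finite S" unfolding S_def by (rule fin_lseq)
  have "0 \<in> S" unfolding S_def by simp
  define j where "j = Max S"
  have jS: "j \<in> S" unfolding j_def using finS \<open>0 \<in> S\<close> by (intro Max_in) auto
  have "Suc j \<notin> S"
  proof
    assume "Suc j \<in> S" hence "Suc j \<le> j" unfolding j_def using finS by (simp add: Max_ge)
    thus False by simp
  qed
  define l where "l = lseq \<alpha> j"
  have l1: "l \<ge> 1" unfolding l_def by (rule lseq_ge1)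
  have lmax: "real_of_int l \<le> max h 1" using jS unfolding S_def l_def by simp
  have "real_of_int (lseq \<alpha> (Suc j)) > max h 1" using \<open>Suc j \<notin> S\<close> unfolding S_def by (simp only: mem_Collect_eq not_le)
  moreover have "lseq \<alpha> (Suc j) \<le> 2 * l" unfolding l_def using assms(3) by (rule lseq_le2)
  ultimately have lh: "h/2 \<le> real_of_int l"
  proof -
    assume A: "real_of_int (lseq \<alpha> (Suc j)) > max h 1" and B: "lseq \<alpha> (Suc j) \<le> 2 * l"
    from B have "real_of_int (lseq \<alpha> (Suc j)) \<le> real_of_int (2 * l)" by (simp only: of_int_le_iff)
    hence "real_of_int (lseq \<alpha> (Suc j)) \<le> 2 * real_of_int l" by simp
    thus ?thesis using A by linarith
  qed
  define T where "T = {j. real_of_int (lseq \<alpha> j) \<le> real n / 2}"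
  have "real n \<ge> 2" using assms(1) by simp
  hence "j \<in> T" unfolding T_def using lmax assms(6) l_def
    by (simp del: lseq.simps)
  hence jH: "j \<le> Hidx n \<alpha>" unfolding Hidx_def T_def[symmetric]
    using fin_lseq[of \<alpha> "real n / 2"] unfolding T_def by (intro Max_ge) auto
  define s where "s = shift K l"
  have s1: "s \<ge> 1" unfolding s_def shift_def by simp
  have sK: "real_of_int (s - 1) \<le> real_of_int l / K"
  proof -
    have "real_of_int \<lfloor>real_of_int l / K\<rfloor> \<le> real_of_int l / K" by (rule of_int_floor_le)
    moreover have "real_of_int l / K \<ge> 0" using l1 assms(4) by simp
    ultimately show ?thesis unfolding s_def shift_def by (simp add: max_def) (smt (verit) of_int_floor_le)
  qed
  have etal: "real_of_int l \<le> real_of_int \<eta>" using lmax assms(7) by linarith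
  have etan: "real_of_int \<eta> \<le> real n - real_of_int l" using lmax assms(8) by linarith
  define i where "i = (\<eta> - l) div s"
  define v where "v = l + i * s"
  have i0: "i \<ge> 0" unfolding i_def using etal s1 by (simp add: pos_imp_zdiv_nonneg_iff)
  have "\<eta> - l \<le> int n - 2*l" using etan by linarith
  hence "i \<le> (int n - 2*l) div s" unfolding i_def using s1 by (intro zdiv_mono1) auto
  hence imax: "i \<le> \<lfloor>real_of_int (int n - 2*l) / real_of_int s\<rfloor>"
    by (simp only: floor_divide_of_int_eq)
  have dm: "\<eta> - l = s * i + (\<eta> - l) mod s" unfolding i_def by simp
  have "0 \<le> (\<eta> - l) mod s" "(\<eta> - l) mod s < s" using s1 by auto
  hence vle: "v \<le> \<eta>" and vge: "\<eta> - v \<le> s - 1" unfolding v_def using dm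
    by (simp_all add: algebra_simps)
  have dist: "\<bar>real_of_int (v - \<eta>)\<bar> \<le> real_of_int l / K"
    using vle vge sK by (smt (verit) of_int_le_iff of_int_diff)
  have mem: "{v - l<..v + l} \<in> seeded n \<alpha> K"
  proof -
    have "{v - l<..v + l} = {i * shift K l<..i * shift K l + 2*l}"
      unfolding v_def s_def by (simp add: algebra_simps)
    hence "{v - l<..v + l} \<in> layer n K l" unfolding layer_def using i0 imax s_def by blast
    thus ?thesis unfolding seeded_def l_def using jH by auto
  qed
  have half: "real_of_int l / K \<le> real_of_int l / 2"
    using l1 assms(4) by (intro divide_left_mono) auto
  have sub: "{v - l<..v + l} \<subseteq> {x. real_of_int \<eta> - max (3*h/2) 1 < real_of_int x
                                \<and> real_of_int x \<le> real_of_int \<eta> + max (3*h/2) 1}"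
  proof
    fix x assume "x \<in> {v - l<..v + l}"
    hence x1: "v - l + 1 \<le> x" and x2: "x \<le> v + l" by auto
    have r1: "real_of_int (v - l + 1) \<le> real_of_int x" using x1 by linarith
    have r2: "real_of_int x \<le> real_of_int (v + l)" using x2 by linarith
    have "real_of_int v \<ge> real_of_int \<eta> - real_of_int l / 2" using dist half by linarith
    moreover have "real_of_int v \<le> real_of_int \<eta>" using vle by simp
    moreover have "3 * real_of_int l / 2 - 1 < max (3*h/2) 1"
    proof (cases "h \<ge> 1")
      case True thus ?thesis using lmax by auto
    next
      case False thus ?thesis using lmax by auto
    qed
    ultimately show "x \<in> {x. real_of_int \<eta> - max (3*h/2) 1 < real_of_int x
                                \<and> real_of_int x \<le> real_of_int \<eta> + max (3*h/2) 1}"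
      using r1 r2 lmax assms(5) by auto
  qed
  show ?thesis using l1 mem lh lmax dist half sub by blast
qed

end
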